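(* Let $\mathcal{S}\subseteq\mathbb{R}^n$ be a $d$-dimensional simplex. For $k\ge0$ let $\mathcal{V}_k$ be the set of all vertices of all simplices in $\operatorname{subdiv}^k(\mathcal{S})$, and let $\mathcal{V}_\infty=\bigcup_{k\ge0}\mathcal{V}_k$. Then $\mathcal{V}_\infty$ is a dense subset of $\mathcal{S}$.
   Context: For a $d$-dimensional simplex $\mathcal{S}$ with vertices $v_1,\dots,v_{d+1}$, its barycenter is $b=\frac{1}{d+1}(v_1+\dots+v_{d+1})$, and $\operatorname{subdiv}(\mathcal{S})$ is the set of the $d+1$ simplices $\operatorname{conv}(v_1,\dots,v_{i-1},b,v_{i+1},\dots,v_{d+1})$, $i=1,\dots,d+1$. Recursively, $\operatorname{subdiv}^0(\mathcal{S})=\{\mathcal{S}\}$ and $\operatorname{subdiv}^k(\mathcal{S})=\bigcup_{\mathcal{T}\in\operatorname{subdiv}^{k-1}(\mathcal{S})}\operatorname{subdiv}(\mathcal{T})$. *)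

theory Defs
  imports "HOL-Analysis.Analysis"
begin

text \<open>A simplex is represented by the list of its vertices v_1,...,v_(d+1).\<close>

definition barycenter :: "('a::real_vector) list \<Rightarrow> 'a" where
  "barycenter vs = (1 / real (length vs)) *\<^sub>R sum_list vs"

definition subdiv :: "('a::real_vector) list \<Rightarrow> 'a list set" where
  "subdiv vs = {vs[i := barycenter vs] | i. i < length vs}"

fun subdiv_iter :: "nat \<Rightarrow> ('a::real_vector) list \<Rightarrow> 'a list set" where
  "subdiv_iter 0 vs = {vs}"
| "subdiv_iter (Suc k) vs = (\<Union>T\<in>subdiv_iter k vs. subdiv T)"

definition subdiv_vertices :: "nat \<Rightarrow> ('a::real_vector) list \<Rightarrow> 'a set" where
  "subdiv_vertices k vs = (\<Union>T\<in>subdiv_iter k vs. set T)"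

end

theory Submission imports Defs begin


lemma sum_list_idx: "sum_list xs = (\<Sum>i<length xs. xs!i)"
  by (simp add: sum_list_sum_nth atLeast0LessThan)

lemma iter_length: "U \<in> subdiv_iter k T \<Longrightarrow> length U = length T"
  by (induction k arbitrary: U) (auto simp: subdiv_def)

lemma iter_trans: "U \<in> subdiv_iter k T \<Longrightarrow> V \<in> subdiv_iter n U \<Longrightarrow> V \<in> subdiv_iter (k+n) T"
  by (induction n arbitrary: V) auto

lemma bary_in_hull:
  assumes "U \<noteq> []" shows "barycenter U \<in> convex hull (set U)"
proof -
  have "barycenter U = (\<Sum>i<length U. (1/real (length U)) *\<^sub>R U!i)"
    by (simp add: barycenter_def sum_list_idx scaleR_sum_right)
  also have "\<dots> \<in> convex hull (set U)"
    by (rule convex_sum) (use assms in \<open>auto intro!: hull_inc\<close>)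
  finally show ?thesis .
qed

lemma iter_hull: "U \<in> subdiv_iter k T \<Longrightarrow> set U \<subseteq> convex hull (set T)"
proof (induction k arbitrary: U)
  case 0 then show ?case by (auto intro: hull_inc)
next
  case (Suc k)
  then obtain V i where V: "V \<in> subdiv_iter k T" "i < length V" "U = V[i := barycenter V]"
    by (auto simp: subdiv_def)
  have "V \<noteq> []" using V by auto
  moreover have "convex hull (set V) \<subseteq> convex hull (set T)"
    using Suc.IH[OF V(1)] by (simp add: hull_minimal)
  ultimately have "barycenter V \<in> convex hull (set T)"
    using bary_in_hull[of V] by blast
  moreover have "set U \<subseteq> insert (barycenter V) (set V)" using V(3) set_update_subset_insert[of V i] by simp
  ultimately show ?case using Suc.IH[OF V(1)] by blast
qed

lemma bary_mset: "mset A = mset B \<Longrightarrow> barycenter A = barycenter B"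
  unfolding barycenter_def
  using mset_eq_length[of A B] sum_mset_sum_list[of A] sum_mset_sum_list[of B] by simp

lemma mset_iter: "mset A = mset B \<Longrightarrow> U \<in> subdiv_iter k A \<Longrightarrow> \<exists>U'\<in>subdiv_iter k B. mset U = mset U'"
proof (induction k arbitrary: U)
  case 0 then show ?case by auto
next
  case (Suc k)
  then obtain V i where V: "V \<in> subdiv_iter k A" "i < length V" "U = V[i := barycenter V]"
    by (auto simp: subdiv_def)
  obtain V' where V': "V' \<in> subdiv_iter k B" "mset V = mset V'" using Suc V by blast
  have "V!i \<in> set V" using V(2) by simp
  hence "V!i \<in> set V'" using mset_eq_setD[OF V'(2)] by simp
  then obtain i' where i': "i' < length V'" "V'!i' = V!i" by (auto simp: in_set_conv_nth)
  have "V'[i' := barycenter V'] \<in> subdiv V'"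
    unfolding subdiv_def using i'(1) by (intro CollectI exI[of _ i']) simp
  hence "V'[i' := barycenter V'] \<in> subdiv_iter (Suc k) B" unfolding subdiv_iter.simps by (rule UN_I[OF V'(1)])
  moreover have "mset U = mset (V'[i' := barycenter V'])"
    using V i' V' bary_mset[OF V'(2)] by (simp add: mset_update)
  ultimately show ?case by blast
qed

lemma mset_vertices: assumes m: "mset A = mset B" shows "subdiv_vertices k A \<subseteq> subdiv_vertices k B"
proof
  fix v assume "v \<in> subdiv_vertices k A"
  then obtain U where U: "U \<in> subdiv_iter k A" "v \<in> set U" by (auto simp: subdiv_vertices_def)
  obtain U' where "U' \<in> subdiv_iter k B" "mset U = mset U'" using mset_iter[OF m U(1)] by blast
  thus "v \<in> subdiv_vertices k B" using U(2) mset_eq_setD[of U U'] by (auto simp: subdiv_vertices_def)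
qed

lemma hull_coeffs:
  fixes T :: "'a::real_vector list"
  shows "x \<in> convex hull (set T) \<Longrightarrow> \<exists>l. (\<forall>i<length T. 0 \<le> l i) \<and> sum l {..<length T} = 1 \<and> x = (\<Sum>i<length T. l i *\<^sub>R T!i)"
proof (induction T arbitrary: x)
  case Nil then show ?case by simp
next
  case (Cons a T)
  show ?case
  proof (cases "T = []")
    case True
    then show ?thesis using Cons.prems by (intro exI[of _ "\<lambda>i. 1"]) auto
  next
    case False
    then obtain u v b where uv: "u \<ge> 0" "v \<ge> 0" "u + v = 1" "b \<in> convex hull (set T)" "x = u *\<^sub>R a + v *\<^sub>R b"
      using Cons.prems convex_hull_insert[of "set T" a] by auto
    obtain l where l: "\<forall>i<length T. 0 \<le> l i" "sum l {..<length T} = 1" "b = (\<Sum>i<length T. l i *\<^sub>R T!i)"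
      using Cons.IH uv(4) by blast
    define l' where "l' i = (if i = 0 then u else v * l (i - 1))" for i
    have "\<forall>i<length (a#T). 0 \<le> l' i" using l uv by (auto simp: l'_def)
    moreover have "sum l' {..<length (a#T)} = 1"
    proof -
      have "sum l' {..<length (a#T)} = u + (\<Sum>i<length T. v * l i)"
        by (simp only: length_Cons sum.lessThan_Suc_shift) (simp add: l'_def)
      also have "\<dots> = u + v * sum l {..<length T}" by (simp add: sum_distrib_left)
      finally show ?thesis using l(2) uv(3) by simp
    qed
    moreover have "x = (\<Sum>i<length (a#T). l' i *\<^sub>R (a#T)!i)"
    proof -
      have "(\<Sum>i<length (a#T). l' i *\<^sub>R (a#T)!i) = u *\<^sub>R a + (\<Sum>i<length T. v *\<^sub>R (l i *\<^sub>R T!i))"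
        by (simp only: length_Cons sum.lessThan_Suc_shift) (simp add: l'_def)
      also have "\<dots> = u *\<^sub>R a + v *\<^sub>R b" by (simp add: l(3) scaleR_sum_right)
      finally show ?thesis using uv(5) by simp
    qed
    ultimately show ?thesis by blast
  qed
qed



definition close :: "'a::real_normed_vector list \<Rightarrow> 'a list \<Rightarrow> real \<Rightarrow> bool" where
  "close A B e \<longleftrightarrow> length A = length B \<and> (\<forall>i<length A. dist (A!i) (B!i) \<le> e)"

lemma close_snoc: "close (V@[y]) (V'@[y']) e \<longleftrightarrow> close V V' e \<and> dist y y' \<le> e"
proof
  assume c: "close (V@[y]) (V'@[y']) e"
  hence l: "length V = length V'" by (simp add: close_def)
  have "\<forall>i<length V. dist (V!i) (V'!i) \<le> e"
  proof (intro allI impI)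
    fix i assume "i < length V"
    hence "dist ((V@[y])!i) ((V'@[y'])!i) \<le> e" using c l unfolding close_def by auto
    thus "dist (V!i) (V'!i) \<le> e" using l \<open>i < length V\<close> by (simp add: nth_append_left)
  qed
  moreover have "dist ((V@[y])!length V) ((V'@[y'])!length V') \<le> e"
    using c l unfolding close_def by (metis length_append_singleton lessI)
  hence "dist y y' \<le> e" by (simp only: nth_append_length)
  ultimately show "close V V' e \<and> dist y y' \<le> e" using l by (simp add: close_def)
next
  assume "close V V' e \<and> dist y y' \<le> e"
  thus "close (V@[y]) (V'@[y']) e"
    unfolding close_def by (auto simp: nth_append less_Suc_eq)
qed

lemma close_update: "close V V' e \<Longrightarrow> dist a b \<le> e \<Longrightarrow> close (V[i := a]) (V'[i := b]) e"
  unfolding close_def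
proof (intro conjI allI impI)
  fix j assume "length V = length V' \<and> (\<forall>i<length V. dist (V ! i) (V' ! i) \<le> e)" "dist a b \<le> e" "j < length (V[i := a])"
  thus "dist (V[i := a] ! j) (V'[i := b] ! j) \<le> e" by (cases "i = j") auto
qed auto

lemma close_mono: "close V V' e \<Longrightarrow> e \<le> e' \<Longrightarrow> close V V' e'"
  unfolding close_def by force

lemma sum_diff_close:
  assumes "close A B e"
  shows "norm (sum_list A - sum_list B) \<le> real (length A) * e"
proof -
  have l: "length A = length B" using assms by (simp add: close_def)
  have "sum_list A - sum_list B = (\<Sum>i<length A. A!i - B!i)"
    using l by (simp add: sum_list_idx sum_subtractf)
  also have "norm \<dots> \<le> (\<Sum>i<length A. norm (A!i - B!i))" by (rule norm_sum)
  also have "\<dots> \<le> (\<Sum>i<length A. e)"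
    by (rule sum_mono) (use assms in \<open>auto simp: close_def dist_norm\<close>)
  finally show ?thesis by simp
qed

lemma bary_close:
  assumes "close A B e" "A \<noteq> []"
  shows "dist (barycenter A) (barycenter B) \<le> e"
proof -
  have l: "length A = length B" using assms by (simp add: close_def)
  have "barycenter A - barycenter B = (1 / real (length A)) *\<^sub>R (sum_list A - sum_list B)"
    using l by (simp add: barycenter_def scaleR_diff_right)
  hence "dist (barycenter A) (barycenter B) = (1 / real (length A)) * norm (sum_list A - sum_list B)"
    by (simp add: dist_norm)
  also have "\<dots> \<le> (1 / real (length A)) * (real (length A) * e)"
    by (rule mult_left_mono[OF sum_diff_close[OF assms(1)]]) simp
  also have "\<dots> = e" using assms(2) by simp
  finally show ?thesis .
qed

lemma bary_snoc: "barycenter (V@[y]) = (1 / (real (length V) + 1)) *\<^sub>R (sum_list V + y)"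
  by (simp add: barycenter_def add.commute)

lemma sum_bary: "V \<noteq> [] \<Longrightarrow> sum_list V = real (length V) *\<^sub>R barycenter V"
  by (simp add: barycenter_def)

lemma bary_snoc_bary: "V \<noteq> [] \<Longrightarrow> barycenter (V @ [barycenter V]) = barycenter V"
proof -
  assume V: "V \<noteq> []"
  have "sum_list V + barycenter V = (real (length V) + 1) *\<^sub>R barycenter V"
    using sum_bary[OF V] by (simp add: algebra_simps)
  thus ?thesis by (simp add: bary_snoc)
qed

lemma push_step:
  assumes "V@[y] \<in> subdiv_iter N T"
  shows "V@[barycenter (V@[y])] \<in> subdiv_iter (Suc N) T"
proof -
  have "(V@[y])[length V := barycenter (V@[y])] = V@[barycenter (V@[y])]" by simp
  have "V@[barycenter (V@[y])] \<in> subdiv (V@[y])"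
    unfolding subdiv_def by (intro CollectI exI[of _ "length V"]) simp
  thus ?thesis unfolding subdiv_iter.simps by (rule UN_I[OF assms])
qed

lemma push:
  assumes "V@[y0] \<in> subdiv_iter N T" "length V = p" "p \<ge> 1" "close V V' e"
  shows "\<exists>y. V@[y] \<in> subdiv_iter (N+n) T \<and>
     dist y (barycenter V') \<le> e + dist y0 (barycenter V') / (real p + 1)^n"
proof (induction n)
  have "0 < length V" using assms(2,3) by simp
  hence "dist (V!0) (V'!0) \<le> e" using assms(4) unfolding close_def by blast
  hence "e \<ge> 0" using zero_le_dist order_trans by blast
  case 0 then show ?case using assms(1) \<open>e \<ge> 0\<close> by (intro exI[of _ y0]) simp
next
  case (Suc n)
  then obtain y where y: "V@[y] \<in> subdiv_iter (N+n) T"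
    "dist y (barycenter V') \<le> e + dist y0 (barycenter V') / (real p + 1)^n" by blast
  define c where "c = barycenter V'"
  define y' where "y' = barycenter (V@[y])"
  have l: "length V' = p" using assms by (simp add: close_def)
  have V'ne: "V' \<noteq> []" using l assms(3) by auto
  have "V'@[c] \<noteq> []" by simp
  have cc: "c = (1 / (real p + 1)) *\<^sub>R (sum_list V' + c)"
    using bary_snoc_bary[OF V'ne] bary_snoc[of V' c] l by (simp add: c_def)
  have y'eq: "y' = (1 / (real p + 1)) *\<^sub>R (sum_list V + y)"
    by (simp add: y'_def bary_snoc assms(2))
  have "y' - c = (1 / (real p + 1)) *\<^sub>R (sum_list V + y) - (1 / (real p + 1)) *\<^sub>R (sum_list V' + c)"
    by (simp only: y'eq cc[symmetric])
  also have "\<dots> = (1 / (real p + 1)) *\<^sub>R ((sum_list V - sum_list V') + (y - c))"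
    by (simp add: algebra_simps)
  finally have "y' - c = (1 / (real p + 1)) *\<^sub>R ((sum_list V - sum_list V') + (y - c))" .
  hence "dist y' c = (1 / (real p + 1)) * norm ((sum_list V - sum_list V') + (y - c))"
    by (simp add: dist_norm)
  also have "\<dots> \<le> (1 / (real p + 1)) * (real p * e + dist y c)"
    by (rule mult_left_mono, rule order.trans[OF norm_triangle_ineq add_mono])
       (use sum_diff_close[OF assms(4)] assms(2) in \<open>auto simp: dist_norm\<close>)
  also have "\<dots> \<le> (1 / (real p + 1)) * (real p * e + (e + dist y0 c / (real p + 1)^n))"
    by (rule mult_left_mono) (use y(2) in \<open>auto simp: c_def\<close>)
  also have "\<dots> = e + dist y0 c / (real p + 1)^(Suc n)"
  proof -
    have pos: "(real p + 1)^n > 0" "real p + 1 > 0" by simp_all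
    define X where "X = (real p + 1)^n"
    have h: "real p * e + (e + dist y0 c / X) = (real p + 1) * e + dist y0 c / X"
      by (simp add: algebra_simps)
    have A: "(1 / (real p + 1)) * ((real p + 1) * e) = e" using pos by simp
    have B: "(1 / (real p + 1)) * (dist y0 c / X) = dist y0 c / ((real p + 1) * X)" by simp
    have "(1 / (real p + 1)) * (real p * e + (e + dist y0 c / X))
        = (1 / (real p + 1)) * ((real p + 1) * e + dist y0 c / X)" by (subst h) (rule refl)
    also have "\<dots> = (1 / (real p + 1)) * ((real p + 1) * e) + (1 / (real p + 1)) * (dist y0 c / X)"
      by (rule distrib_left)
    also have "\<dots> = e + dist y0 c / ((real p + 1) * X)" by (simp only: A B)
    also have "\<dots> = e + dist y0 c / (real p + 1)^(Suc n)"
      using pos by (simp add: X_def)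
    finally show ?thesis by (simp add: X_def)
  qed
  finally have "dist y' c \<le> e + dist y0 c / (real p + 1)^(Suc n)" .
  moreover have "V@[y'] \<in> subdiv_iter (N + Suc n) T" using push_step[OF y(1)] by (simp add: y'_def)
  ultimately show ?case by (auto simp: c_def)
qed

lemma small_pow:
  assumes "e > 0" "p \<ge> (1::nat)"
  shows "\<exists>n. d / (real p + 1)^n < e"
proof -
  obtain n where "d / e < (real p + 1)^n" using real_arch_pow[of "real p + 1" "d/e"] assms by auto
  hence "d < e * (real p + 1)^n" using assms by (simp add: field_simps)
  thus ?thesis using assms by (intro exI[of _ n]) (simp add: field_simps)
qed

lemma face_claim:
  assumes "length W = p" "p \<ge> 1"
  shows "U' \<in> subdiv_iter k W \<Longrightarrow> e > 0 \<Longrightarrow> \<exists>N. \<exists>U \<in> subdiv_iter N (W@[z]). close U (U'@[barycenter U']) e"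
proof (induction k arbitrary: U' e)
  case 0
  hence U': "U' = W" by simp
  have cW: "close W W (e/2)" using 0 by (simp add: close_def)
  obtain n where n: "dist z (barycenter W) / (real p + 1)^n < e/2" using small_pow[of "e/2" p] 0 assms by auto
  obtain y where y: "W@[y] \<in> subdiv_iter (0+n) (W@[z])"
     "dist y (barycenter W) \<le> e/2 + dist z (barycenter W) / (real p + 1)^n"
    using push[of W z 0 "W@[z]" p W "e/2" n] assms cW by auto
  have "close (W@[y]) (W@[barycenter W]) e"
  proof -
    have "dist y (barycenter W) \<le> e" using y(2) n by linarith
    thus ?thesis using 0 by (subst close_snoc) (auto simp: close_def)
  qed
  thus ?case using y(1) U' by auto
next
  case (Suc k)
  from Suc.prems obtain U0 i where U0: "U0 \<in> subdiv_iter k W" "i < length U0" "U' = U0[i := barycenter U0]"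
    by (auto simp: subdiv_def)
  have lU0: "length U0 = p" using iter_length[OF U0(1)] assms by simp
  have U0ne: "U0 \<noteq> []" using lU0 assms by auto
  define c0 where "c0 = barycenter U0"
  obtain N U where U: "U \<in> subdiv_iter N (W@[z])" "close U (U0@[c0]) (e/2)"
    using Suc.IH[OF U0(1), of "e/2"] Suc.prems by (auto simp: c0_def)
  have lU: "length U = Suc p" using U(2) lU0 by (simp add: close_def)
  obtain V y where Vy: "U = V@[y]"
    using lU by (cases U rule: rev_cases) auto
  have lV: "length V = p" using lU Vy by simp
  have "close V U0 (e/2) \<and> dist y c0 \<le> e/2" using U(2) unfolding Vy close_snoc .
  hence cV: "close V U0 (e/2)" "dist y c0 \<le> e/2" by auto
  have bU: "dist (barycenter U) c0 \<le> e/2"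
    using bary_close[OF U(2)] bary_snoc_bary[OF U0ne] Vy by (simp add: c0_def)
  have U1: "V[i := barycenter U] @ [y] \<in> subdiv_iter (Suc N) (W@[z])"
  proof -
    have "i < length U" using U0(2) lU0 lU by simp
    hence "U[i := barycenter U] \<in> subdiv U" unfolding subdiv_def by (intro CollectI exI[of _ i]) simp
    moreover have "U[i := barycenter U] = V[i := barycenter U] @ [y]"
      using Vy U0(2) lU0 lV by (simp add: list_update_append)
    ultimately show ?thesis unfolding subdiv_iter.simps by (metis UN_I[OF U(1)])
  qed
  have cV1: "close (V[i := barycenter U]) U' (e/2)"
    using close_update[OF cV(1) bU] U0(3) by (simp add: c0_def)
  have "U' \<noteq> []" using U0 U0ne by simp
  obtain n where n: "dist y (barycenter U') / (real p + 1)^n < e/2"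
    using small_pow[of "e/2" p] Suc.prems assms by auto
  obtain y' where y': "V[i := barycenter U] @ [y'] \<in> subdiv_iter (Suc N + n) (W@[z])"
     "dist y' (barycenter U') \<le> e/2 + dist y (barycenter U') / (real p + 1)^n"
    using push[OF U1 _ assms(2) cV1, of n] lV by auto
  have "dist y' (barycenter U') \<le> e" using y'(2) n Suc.prems by linarith
  hence "close (V[i := barycenter U] @ [y']) (U'@[barycenter U']) e"
    using close_mono[OF cV1, of e] Suc.prems by (simp add: close_snoc)
  thus ?case using y'(1) by blast
qed

lemma face:
  fixes W :: "'a::real_normed_vector list"
  assumes "length W \<ge> 1"
  shows "subdiv_vertices k W \<subseteq> closure (\<Union>N. subdiv_vertices N (W@[z]))"
proof
  fix v assume "v \<in> subdiv_vertices k W"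
  then obtain U' where U': "U' \<in> subdiv_iter k W" "v \<in> set U'" by (auto simp: subdiv_vertices_def)
  then obtain i where i: "i < length U'" "v = U'!i" by (auto simp: in_set_conv_nth)
  show "v \<in> closure (\<Union>N. subdiv_vertices N (W@[z]))"
    unfolding closure_approachable
  proof (intro allI impI)
    fix e :: real assume e: "e > 0"
    obtain N U where U: "U \<in> subdiv_iter N (W@[z])" "close U (U'@[barycenter U']) (e/2)"
      using face_claim[OF refl assms U'(1), of "e/2" z] e by auto
    have "length U = Suc (length U')" using U(2) by (simp add: close_def)
    hence "dist (U!i) ((U'@[barycenter U'])!i) \<le> e/2" using U(2) i unfolding close_def by auto
    hence "dist (U!i) v \<le> e/2" using i by (simp add: nth_append_left)
    moreover have "U!i \<in> set U" using i \<open>length U = Suc (length U')\<close> by simp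
    hence "U!i \<in> subdiv_vertices N (W@[z])"
      using U(1) unfolding subdiv_vertices_def by blast
    ultimately show "\<exists>y\<in>\<Union>N. subdiv_vertices N (W@[z]). dist y v < e" using e by force
  qed
qed



definition amin :: "(nat \<Rightarrow> real) \<Rightarrow> nat \<Rightarrow> nat" where
  "amin l m = (SOME j. j < m \<and> (\<forall>i<m. l j \<le> l i))"

lemma amin: assumes "m > 0" shows "amin l m < m" "\<forall>i<m. l (amin l m) \<le> l i"
proof -
  define a where "a = Min (l ` {..<m})"
  have "a \<in> l ` {..<m}" unfolding a_def using assms by (intro Min_in) auto
  then obtain j where j: "j < m" "l j = a" by auto
  have "\<forall>i<m. l j \<le> l i" using j unfolding a_def by auto
  hence "\<exists>j. j < m \<and> (\<forall>i<m. l j \<le> l i)" using j by blast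
  from someI_ex[OF this] show "amin l m < m" "\<forall>i<m. l (amin l m) \<le> l i"
    unfolding amin_def by auto
qed

definition stp :: "('a::real_vector list \<times> (nat \<Rightarrow> real)) \<Rightarrow> ('a list \<times> (nat \<Rightarrow> real))" where
  "stp p = (let U = fst p; l = snd p; j = amin l (length U) in
     (U[j := barycenter U], \<lambda>i. if i = j then real (length U) * l j else l i - l j))"

definition pth where "pth T l0 k = (stp ^^ k) (T, l0)"

lemma pth_Suc: "pth T l0 (Suc k) = stp (pth T l0 k)"
  by (simp add: pth_def)

lemma step_inv:
  fixes U :: "'a::real_vector list"
  assumes m: "length U = m" "m > 0"
    and l: "\<forall>i<m. 0 \<le> l i" "sum l {..<m} = 1" "x = (\<Sum>i<m. l i *\<^sub>R U!i)"
    and st: "stp (U, l) = (U', l')"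
  shows "U' \<in> subdiv U" "length U' = m" "\<forall>i<m. 0 \<le> l' i" "sum l' {..<m} = 1"
    "x = (\<Sum>i<m. l' i *\<^sub>R U'!i)"
proof -
  define j where "j = amin l m"
  have j: "j < m" "\<forall>i<m. l j \<le> l i" using amin[OF m(2)] by (auto simp: j_def)
  define b where "b = barycenter U"
  have U': "U' = U[j := b]" and l': "l' = (\<lambda>i. if i = j then real m * l j else l i - l j)"
    using st m(1) by (auto simp: stp_def Let_def j_def b_def)
  show "U' \<in> subdiv U" unfolding subdiv_def U' b_def using j m(1) by (intro CollectI exI[of _ j]) simp
  show "length U' = m" using U' m(1) by simp
  show "\<forall>i<m. 0 \<le> l' i" using l' j l(1) by auto
  have l'2: "l' = (\<lambda>i. (l i - l j) + (if i = j then real m * l j else 0))"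
    using l' by auto
  have "sum l' {..<m} = sum l {..<m} - real m * l j + real m * l j"
    unfolding l'2 using j by (simp add: sum.distrib sum_subtractf)
  thus "sum l' {..<m} = 1" using l(2) by simp
  have "(\<Sum>i<m. l' i *\<^sub>R U'!i) = (\<Sum>i<m. (l i - l j) *\<^sub>R U'!i) + (\<Sum>i<m. (if i = j then real m * l j else 0) *\<^sub>R U'!i)"
    unfolding l'2 by (simp add: scaleR_add_left sum.distrib)
  also have "(\<Sum>i<m. (l i - l j) *\<^sub>R U'!i) = (\<Sum>i<m. (l i - l j) *\<^sub>R U!i)"
  proof (rule sum.cong)
    fix i assume "i \<in> {..<m}"
    thus "(l i - l j) *\<^sub>R U'!i = (l i - l j) *\<^sub>R U!i" by (cases "i = j") (auto simp: U')
  qed simp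
  also have "(\<Sum>i<m. (if i = j then real m * l j else 0) *\<^sub>R U'!i) = (real m * l j) *\<^sub>R b"
  proof -
    have "(\<Sum>i<m. (if i = j then real m * l j else 0) *\<^sub>R U'!i) = (\<Sum>i<m. if i = j then (real m * l j) *\<^sub>R U'!i else 0)"
      by (rule sum.cong) auto
    also have "\<dots> = (real m * l j) *\<^sub>R U'!j" using j by simp
    also have "U'!j = b" using j m(1) by (simp add: U')
    finally show ?thesis .
  qed
  also have "(real m * l j) *\<^sub>R b = l j *\<^sub>R (\<Sum>i<m. U!i)"
    using m by (simp add: b_def barycenter_def sum_list_idx)
  also have "(\<Sum>i<m. (l i - l j) *\<^sub>R U!i) = x - l j *\<^sub>R (\<Sum>i<m. U!i)"
    using l(3) by (simp add: scaleR_diff_left sum_subtractf scaleR_sum_right)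
  finally show "x = (\<Sum>i<m. l' i *\<^sub>R U'!i)" by simp
qed



lemma avg_bnd:
  assumes "m > 0" "\<forall>p<m. lo \<le> f p \<and> f p \<le> hi"
  shows "lo \<le> (1 / real m) * (\<Sum>p<m. f p) \<and> (1 / real m) * (\<Sum>p<m. f p) \<le> hi"
proof -
  have "real (card {..<m}) * lo \<le> (\<Sum>p<m. f p)"
    by (rule sum_bounded_below) (use assms(2) in auto)
  moreover have "(\<Sum>p<m. f p) \<le> real (card {..<m}) * hi"
    by (rule sum_bounded_above) (use assms(2) in auto)
  ultimately have "real m * lo \<le> (\<Sum>p<m. f p)" "(\<Sum>p<m. f p) \<le> real m * hi" by simp_all
  thus ?thesis using assms(1) by (simp add: field_simps)
qed

lemma sum_minus_one:
  assumes "l < m" "\<forall>p<m. a \<le> f p \<and> f p \<le> A"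
  shows "(real m - 1) * a \<le> (\<Sum>p<m. f p) - f l \<and> (\<Sum>p<m. f p) - f l \<le> (real m - 1) * A"
proof -
  have s: "(\<Sum>p<m. f p) = f l + (\<Sum>p\<in>{..<m} - {l}. f p)"
    using assms(1) by (simp add: sum.remove)
  have c: "real (card ({..<m} - {l})) = real m - 1" using assms(1) by (simp add: of_nat_diff)
  have "real (card ({..<m} - {l})) * a \<le> (\<Sum>p\<in>{..<m} - {l}. f p)"
    by (rule sum_bounded_below) (use assms(2) in auto)
  moreover have "(\<Sum>p\<in>{..<m} - {l}. f p) \<le> real (card ({..<m} - {l})) * A"
    by (rule sum_bounded_above) (use assms(2) in auto)
  ultimately show ?thesis using s c by simp
qed

lemma bary_comp:
  fixes V :: "(real^'n) list"
  assumes "length V = m"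
  shows "barycenter V $ c = (1 / real m) * (\<Sum>p<m. V!p $ c)"
  using assms by (simp add: barycenter_def sum_list_idx)

lemma contr_block:
  fixes U :: "nat \<Rightarrow> (real^'n) list"
  assumes H1: "\<forall>t. length (U t) = m" and H2: "\<forall>t. J t < m"
    and H3: "\<forall>t. U (Suc t) = (U t)[J t := barycenter (U t)]" and m0: "m > 0"
    and B: "\<forall>i<m. a \<le> U K ! i $ c \<and> U K ! i $ c \<le> A"
  shows "(\<forall>i<m. a \<le> U (K+s) ! i $ c \<and> U (K+s) ! i $ c \<le> A) \<and>
    (\<forall>i<m. (\<exists>t. K \<le> t \<and> t < K+s \<and> J t = i) \<longrightarrow>
       (\<forall>l<m. (real m - 1) * a \<le> real m * (U (K+s) ! i $ c) - U (K+s) ! l $ c \<and>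
               real m * (U (K+s) ! i $ c) - U (K+s) ! l $ c \<le> (real m - 1) * A))"
proof (induction s)
  case 0 then show ?case using B by auto
next
  case (Suc s)
  define t where "t = K + s"
  define f where "f p = U t ! p $ c" for p
  define j where "j = J t"
  define mu where "mu = (1 / real m) * (\<Sum>p<m. f p)"
  have IH1: "\<forall>p<m. a \<le> f p \<and> f p \<le> A" using Suc.IH by (simp add: f_def t_def)
  have IH2: "\<forall>i<m. (\<exists>t'. K \<le> t' \<and> t' < t \<and> J t' = i) \<longrightarrow>
       (\<forall>l<m. (real m - 1) * a \<le> real m * f i - f l \<and> real m * f i - f l \<le> (real m - 1) * A)"
    using Suc.IH by (simp add: f_def t_def)
  have j: "j < m" using H2 by (simp add: j_def)
  have new: "U (K + Suc s) ! i $ c = (if i = j then mu else f i)" if "i < m" for i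
  proof -
    have "U (K + Suc s) = (U t)[j := barycenter (U t)]" using H3 by (simp add: t_def j_def)
    thus ?thesis using that H1 bary_comp[of "U t" m c]
      by (auto simp: mu_def f_def nth_list_update)
  qed
  have mub: "a \<le> mu \<and> mu \<le> A" using avg_bnd[OF m0 IH1] by (simp add: mu_def)
  have part1: "\<forall>i<m. a \<le> U (K + Suc s) ! i $ c \<and> U (K + Suc s) ! i $ c \<le> A"
    using new IH1 mub by auto
  have part2: "(real m - 1) * a \<le> real m * (U (K + Suc s) ! i $ c) - U (K + Suc s) ! l $ c \<and>
        real m * (U (K + Suc s) ! i $ c) - U (K + Suc s) ! l $ c \<le> (real m - 1) * A"
    if i: "i < m" and l: "l < m" and rep: "\<exists>t'. K \<le> t' \<and> t' < K + Suc s \<and> J t' = i" for i l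
  proof (cases "i = j")
    case True
    show ?thesis
    proof (cases "l = j")
      case True
      have "real m * mu - mu = (real m - 1) * mu" by (simp add: algebra_simps)
      moreover have "(real m - 1) * a \<le> (real m - 1) * mu" "(real m - 1) * mu \<le> (real m - 1) * A"
        using mub m0 by (auto intro!: mult_left_mono)
      ultimately show ?thesis using new i l \<open>i = j\<close> True by simp
    next
      case False
      have "real m * mu = (\<Sum>p<m. f p)" using m0 by (simp add: mu_def)
      thus ?thesis using new[OF i] new[OF l] \<open>i = j\<close> False sum_minus_one[OF l IH1] by simp
    qed
  next
    case False
    have rep': "\<exists>t'. K \<le> t' \<and> t' < t \<and> J t' = i"
    proof -
      obtain t' where "K \<le> t'" "t' < K + Suc s" "J t' = i" using rep by blast
      moreover have "t' \<noteq> t" using False \<open>J t' = i\<close> by (auto simp: j_def)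
      ultimately show ?thesis by (auto simp: t_def)
    qed
    have bi: "\<forall>p<m. (real m - 1) * a \<le> real m * f i - f p \<and> real m * f i - f p \<le> (real m - 1) * A"
      using IH2 i rep' by blast
    show ?thesis
    proof (cases "l = j")
      case True
      have "real m * f i - mu = (1 / real m) * (\<Sum>p<m. real m * f i - f p)"
        using m0 by (simp add: mu_def sum_subtractf field_simps)
      moreover have "(real m - 1) * a \<le> (1 / real m) * (\<Sum>p<m. real m * f i - f p) \<and>
          (1 / real m) * (\<Sum>p<m. real m * f i - f p) \<le> (real m - 1) * A"
        by (rule avg_bnd[OF m0]) (use bi in auto)
      ultimately show ?thesis using new[OF i] new[OF l] False True by simp
    next
      case l: False
      show ?thesis using new[OF i] new[OF \<open>l < m\<close>] False l bi \<open>l < m\<close> by simp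
    qed
  qed
  show ?case using part1 part2 by blast
qed

lemma contr_spread:
  fixes U :: "nat \<Rightarrow> (real^'n) list"
  assumes H1: "\<forall>t. length (U t) = m" and H2: "\<forall>t. J t < m"
    and H3: "\<forall>t. U (Suc t) = (U t)[J t := barycenter (U t)]" and m0: "m > 0"
    and W: "\<forall>i<m. \<exists>t. K \<le> t \<and> t < K+s \<and> J t = i"
    and D: "\<forall>i<m. \<forall>l<m. U K ! i $ c - U K ! l $ c \<le> D"
  shows "\<forall>i<m. \<forall>l<m. U (K+s) ! i $ c - U (K+s) ! l $ c \<le> (real m - 1) / (real m + 1) * D"
proof (intro allI impI)
  fix i l assume i: "i < m" and l: "l < m"
  define a where "a = Min ((\<lambda>p. U K ! p $ c) ` {..<m})"
  have "a \<in> (\<lambda>p. U K ! p $ c) ` {..<m}" unfolding a_def using m0 by (intro Min_in) auto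
  then obtain p0 where p0: "p0 < m" "a = U K ! p0 $ c" by auto
  have B: "\<forall>i<m. a \<le> U K ! i $ c \<and> U K ! i $ c \<le> a + D"
  proof (intro allI impI conjI)
    fix i assume "i < m"
    thus "a \<le> U K ! i $ c" unfolding a_def by auto
    show "U K ! i $ c \<le> a + D" using D \<open>i < m\<close> p0 by force
  qed
  have R: "\<forall>i<m. (\<exists>t. K \<le> t \<and> t < K+s \<and> J t = i) \<longrightarrow>
       (\<forall>l<m. (real m - 1) * a \<le> real m * (U (K+s) ! i $ c) - U (K+s) ! l $ c \<and>
               real m * (U (K+s) ! i $ c) - U (K+s) ! l $ c \<le> (real m - 1) * (a + D))"
    using contr_block[OF H1 H2 H3 m0 B, of s] by blast
  have r1: "real m * (U (K+s) ! i $ c) - U (K+s) ! l $ c \<le> (real m - 1) * (a + D)"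
    using R i l W by blast
  have r2: "(real m - 1) * a \<le> real m * (U (K+s) ! l $ c) - U (K+s) ! i $ c"
    using R i l W by blast
  have "(real m + 1) * (U (K+s) ! i $ c - U (K+s) ! l $ c) \<le> (real m - 1) * D"
    using r1 r2 by (simp add: algebra_simps)
  thus "U (K+s) ! i $ c - U (K+s) ! l $ c \<le> (real m - 1) / (real m + 1) * D"
    by (simp add: field_simps add_pos_pos)
qed

lemma contr_iter:
  fixes U :: "nat \<Rightarrow> (real^'n) list"
  assumes H1: "\<forall>t. length (U t) = m" and H2: "\<forall>t. J t < m"
    and H3: "\<forall>t. U (Suc t) = (U t)[J t := barycenter (U t)]" and m0: "m > 0"
    and W: "\<forall>K. \<forall>i<m. \<exists>t. K \<le> t \<and> t < K+Lw \<and> J t = i"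
    and D: "\<forall>c. \<forall>i<m. \<forall>l<m. U 0 ! i $ c - U 0 ! l $ c \<le> D"
  shows "\<forall>c. \<forall>i<m. \<forall>l<m. U (n*Lw) ! i $ c - U (n*Lw) ! l $ c \<le> ((real m - 1) / (real m + 1))^n * D"
proof (induction n)
  case 0 then show ?case using D by simp
next
  case (Suc n)
  show ?case
  proof (rule allI)
    fix c
    have "\<forall>i<m. \<forall>l<m. U (n*Lw + Lw) ! i $ c - U (n*Lw + Lw) ! l $ c
        \<le> (real m - 1) / (real m + 1) * (((real m - 1) / (real m + 1))^n * D)"
      by (rule contr_spread[OF H1 H2 H3 m0]) (use W Suc.IH in blast)+
    thus "\<forall>i<m. \<forall>l<m. U (Suc n*Lw) ! i $ c - U (Suc n*Lw) ! l $ c \<le> ((real m - 1) / (real m + 1))^Suc n * D"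
      by (simp add: add.commute mult.assoc)
  qed
qed

lemma window:
  assumes H: "\<forall>t. \<forall>i<m. L (Suc t) i = (if i = J t then real m * L t (J t) else L t i - L t (J t))"
    and P: "\<forall>t i. i < m \<longrightarrow> \<delta> < L t i" and O: "\<forall>t i. i < m \<longrightarrow> L t i \<le> 1"
    and d: "\<delta> > 0" and Lw: "real Lw * \<delta> \<ge> 1" and J: "\<forall>t. J t < m"
  shows "\<forall>i<m. \<exists>t. K \<le> t \<and> t < K + Lw \<and> J t = i"
proof (intro allI impI, rule ccontr)
  fix i assume i: "i < m" and N: "\<not> (\<exists>t. K \<le> t \<and> t < K + Lw \<and> J t = i)"
  have "s \<le> Lw \<Longrightarrow> L (K+s) i \<le> L K i - real s * \<delta>" for s
  proof (induction s)
    case 0 then show ?case by simp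
  next
    case (Suc s)
    have "J (K+s) \<noteq> i" using N Suc.prems by auto
    hence "L (K + Suc s) i = L (K+s) i - L (K+s) (J (K+s))" using H i by auto
    moreover have "\<delta> < L (K+s) (J (K+s))" using P J by auto
    ultimately show ?case using Suc by (simp add: algebra_simps)
  qed
  from this[of Lw] have "L (K+Lw) i \<le> L K i - real Lw * \<delta>" by simp
  moreover have "L K i \<le> 1" using O i by blast
  ultimately have "L (K+Lw) i \<le> 1 - real Lw * \<delta>" by linarith
  moreover have "\<delta> < L (K+Lw) i" using P i by blast
  ultimately show False using Lw d by linarith
qed



lemma path_inv:
  fixes T :: "'a::real_vector list"
  assumes "length T = m" "m > 0" "\<forall>i<m. 0 \<le> l0 i" "sum l0 {..<m} = 1" "x = (\<Sum>i<m. l0 i *\<^sub>R T!i)"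
  shows "fst (pth T l0 k) \<in> subdiv_iter k T \<and> length (fst (pth T l0 k)) = m \<and>
    (\<forall>i<m. 0 \<le> snd (pth T l0 k) i) \<and> sum (snd (pth T l0 k)) {..<m} = 1 \<and>
    x = (\<Sum>i<m. snd (pth T l0 k) i *\<^sub>R fst (pth T l0 k) ! i)"
proof (induction k)
  case 0 then show ?case using assms by (simp add: pth_def)
next
  case (Suc k)
  obtain U l where Ul: "pth T l0 k = (U, l)" by (cases "pth T l0 k")
  obtain U' l' where Ul': "stp (U, l) = (U', l')" by (cases "stp (U, l)")
  have I: "U \<in> subdiv_iter k T" "length U = m" "\<forall>i<m. 0 \<le> l i" "sum l {..<m} = 1"
    "x = (\<Sum>i<m. l i *\<^sub>R U!i)" using Suc Ul by auto
  note S = step_inv[OF I(2) assms(2) I(3-5) Ul']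
  have "pth T l0 (Suc k) = (U', l')" using Ul Ul' by (simp add: pth_Suc)
  thus ?case using S I(1) by auto
qed

lemma path_step:
  fixes T :: "'a::real_vector list"
  assumes "length (fst (pth T l0 k)) = m"
  shows "fst (pth T l0 (Suc k)) = (fst (pth T l0 k))[amin (snd (pth T l0 k)) m := barycenter (fst (pth T l0 k))]"
    "snd (pth T l0 (Suc k)) = (\<lambda>i. if i = amin (snd (pth T l0 k)) m then real m * snd (pth T l0 k) (amin (snd (pth T l0 k)) m)
        else snd (pth T l0 k) i - snd (pth T l0 k) (amin (snd (pth T l0 k)) m))"
proof -
  obtain U l where Ul: "pth T l0 k = (U, l)" by (cases "pth T l0 k")
  have "length U = m" using assms Ul by simp
  thus "fst (pth T l0 (Suc k)) = (fst (pth T l0 k))[amin (snd (pth T l0 k)) m := barycenter (fst (pth T l0 k))]"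
    using Ul by (simp add: pth_Suc stp_def Let_def)
  show "snd (pth T l0 (Suc k)) = (\<lambda>i. if i = amin (snd (pth T l0 k)) m then real m * snd (pth T l0 k) (amin (snd (pth T l0 k)) m)
        else snd (pth T l0 k) i - snd (pth T l0 k) (amin (snd (pth T l0 k)) m))"
    unfolding pth_Suc Ul using \<open>length U = m\<close> by (intro ext) (simp add: stp_def Let_def)
qed

lemma remove_set: "i < length U \<Longrightarrow> i \<noteq> j \<Longrightarrow> U!i \<in> set (take j U @ drop (Suc j) U)"
proof (cases "i < j")
  case True
  assume "i < length U"
  hence "take j U ! i = U ! i" "i < length (take j U)" using True by auto
  thus ?thesis by (metis Un_iff nth_mem set_append)
next
  case False
  assume a: "i < length U" "i \<noteq> j"
  hence "drop (Suc j) U ! (i - Suc j) = U ! i" "i - Suc j < length (drop (Suc j) U)" using False by auto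
  thus ?thesis by (metis Un_iff nth_mem set_append)
qed

lemma face_hull:
  fixes U :: "(real^'n) list"
  assumes IH: "\<And>W::(real^'n) list. length W = m' \<Longrightarrow> convex hull (set W) \<subseteq> closure (\<Union>k. subdiv_vertices k W)"
    and U: "U \<in> subdiv_iter k T" "length U = Suc m'" "m' \<ge> 1" "j < Suc m'"
  shows "convex hull (set (take j U @ drop (Suc j) U)) \<subseteq> closure (\<Union>k. subdiv_vertices k T)"
proof -
  define W where "W = take j U @ drop (Suc j) U"
  define V where "V = (\<Union>k. subdiv_vertices k T)"
  have lW: "length W = m'" using U by (simp add: W_def)
  have ms: "mset (W @ [U!j]) = mset U"
    using id_take_nth_drop[of j U] U by (simp add: W_def) (metis mset.simps(2) mset_append union_mset_add_mset_right add_mset_add_single)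
  have sub1: "(\<Union>N. subdiv_vertices N (W @ [U!j])) \<subseteq> V"
  proof -
    have "subdiv_vertices N (W @ [U!j]) \<subseteq> subdiv_vertices N U" for N using mset_vertices[OF ms] .
    moreover have "subdiv_vertices N U \<subseteq> subdiv_vertices (k+N) T" for N
      unfolding subdiv_vertices_def using iter_trans[OF U(1)] by blast
    ultimately show ?thesis unfolding V_def by blast
  qed
  have "(\<Union>k. subdiv_vertices k W) \<subseteq> closure V"
    using face[of W, where z = "U!j"] lW U(3) closure_mono[OF sub1] by blast
  hence "closure (\<Union>k. subdiv_vertices k W) \<subseteq> closure V"
    by (simp add: closure_minimal)
  thus ?thesis using IH[OF lW] by (simp add: W_def V_def)
qed



lemma main_dense:
  fixes T :: "(real^'n) list"
  shows "length T = m \<Longrightarrow> convex hull (set T) \<subseteq> closure (\<Union>k. subdiv_vertices k T)"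
proof (induction m arbitrary: T rule: less_induct)
  case (less m T)
  define V where "V = (\<Union>k. subdiv_vertices k T)"
  show ?case
  proof (cases "m \<le> 1")
    case True
    show ?thesis
    proof (cases "m = 0")
      case True thus ?thesis using less.prems by simp
    next
      case False
      then obtain v where "T = [v]" using True less.prems
        by (metis One_nat_def le_SucE le_zero_eq length_0_conv length_Suc_conv)
      moreover have "v \<in> subdiv_vertices 0 [v]" by (simp add: subdiv_vertices_def)
      ultimately show ?thesis using closure_subset by fastforce
    qed
  next
    case False
    then obtain m' where m': "m = Suc m'" "m' \<ge> 1" by (metis Suc_pred' less_one not_le_imp_less not_less_eq_eq)
    have m0: "m > 0" using m' by simp
    have IH: "\<And>W::(real^'n) list. length W = m' \<Longrightarrow> convex hull (set W) \<subseteq> closure (\<Union>k. subdiv_vertices k W)"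
      by (metis less.IH lessI m'(1))
    show ?thesis
    proof
      fix x assume x: "x \<in> convex hull (set T)"
      obtain l0 where l0: "\<forall>i<m. 0 \<le> l0 i" "sum l0 {..<m} = 1" "x = (\<Sum>i<m. l0 i *\<^sub>R T!i)"
        using hull_coeffs[OF x] less.prems by blast
      have "bounded (convex hull (set T))"
        by (intro compact_imp_bounded compact_convex_hull finite_imp_compact) simp
      then obtain R where R: "R > 0" "\<forall>p\<in>convex hull (set T). norm p \<le> R"
        unfolding bounded_pos by blast
      define U where "U k = fst (pth T l0 k)" for k
      define L where "L k = snd (pth T l0 k)" for k
      define J where "J k = amin (L k) m" for k
      have inv: "U k \<in> subdiv_iter k T" "length (U k) = m" "\<forall>i<m. 0 \<le> L k i" "sum (L k) {..<m} = 1"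
        "x = (\<Sum>i<m. L k i *\<^sub>R U k ! i)" for k
        using path_inv[OF less.prems m0 l0, of k] by (auto simp: U_def L_def)
      have lenp: "length (fst (pth T l0 t)) = m" for t using inv(2)[of t] by (simp add: U_def)
      have H3: "\<forall>t. U (Suc t) = (U t)[J t := barycenter (U t)]"
      proof
        fix t
        from path_step(1)[OF lenp[of t]] show "U (Suc t) = (U t)[J t := barycenter (U t)]"
          by (simp add: U_def J_def L_def)
      qed
      have HL: "\<forall>t. \<forall>i<m. L (Suc t) i = (if i = J t then real m * L t (J t) else L t i - L t (J t))"
      proof (intro allI impI)
        fix t i
        from path_step(2)[OF lenp[of t]] show "L (Suc t) i = (if i = J t then real m * L t (J t) else L t i - L t (J t))"
          by (simp add: U_def J_def L_def)
      qed
      have HJ: "\<forall>t. J t < m" using amin[OF m0] by (simp add: J_def)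
      have UinT: "U k ! i \<in> convex hull (set T)" if "i < m" for k i
        using iter_hull[OF inv(1)[of k]] inv(2)[of k] that by auto
      have "x \<in> closure (closure V)"
        unfolding closure_approachable[of x]
      proof (intro allI impI)
        fix e :: real assume e: "e > 0"
        define \<delta> where "\<delta> = min (1/2) (e / (4 * R))"
        have d0: "\<delta> > 0" "\<delta> \<le> 1/2" "\<delta> \<le> e / (4 * R)" using e R by (auto simp: \<delta>_def)
        show "\<exists>y\<in>closure V. dist y x < e"
        proof (cases "\<exists>k j. j < m \<and> L k j \<le> \<delta>")
          case True
          then obtain k j where kj: "j < m" "L k j \<le> \<delta>" by blast
          define l where "l = L k"
          define A where "A = {..<m} - {j}"
          define W where "W = take j (U k) @ drop (Suc j) (U k)"
          have lj: "0 \<le> l j" "l j \<le> 1/2" using inv(3) kj d0 by (auto simp: l_def)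
          define y where "y = (\<Sum>i\<in>A. (l i / (1 - l j)) *\<^sub>R U k ! i)"
          have sA: "sum l A = 1 - l j"
            using inv(4)[of k] kj(1) by (simp add: A_def l_def sum.remove)
          have "y \<in> convex hull (set W)" unfolding y_def
          proof (rule convex_sum)
            show "finite A" by (simp add: A_def)
            show "convex (convex hull (set W))" by simp
            show "(\<Sum>i\<in>A. l i / (1 - l j)) = 1" using sA lj by (simp add: sum_divide_distrib[symmetric])
            show "\<And>i. i \<in> A \<Longrightarrow> 0 \<le> l i / (1 - l j)" using inv(3) lj by (auto simp: A_def l_def)
            fix i assume "i \<in> A"
            hence "i < m" "i \<noteq> j" by (auto simp: A_def)
            hence "U k ! i \<in> set W" using remove_set[of i "U k" j] inv(2)[of k] by (simp add: W_def)
            thus "U k ! i \<in> convex hull (set W)" by (rule hull_inc)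
          qed
          moreover have lk: "length (U k) = Suc m'" using inv(2)[of k] m' by simp
          moreover have "j < Suc m'" using kj(1) m' by simp
          ultimately have yV: "y \<in> closure V"
            using face_hull[OF IH inv(1)[of k] lk m'(2), where j=j] by (auto simp: W_def V_def)
          have "set W \<subseteq> set (U k)" by (auto simp: W_def dest: in_set_takeD in_set_dropD)
          hence "convex hull (set W) \<subseteq> convex hull (set T)"
            using iter_hull[OF inv(1)[of k]] by (metis convex_convex_hull hull_minimal order_trans hull_mono)
          hence ny: "norm y \<le> R" using R \<open>y \<in> convex hull (set W)\<close> by blast
          have nu: "norm (U k ! j) \<le> R" using R UinT kj(1) by blast
          have "x = l j *\<^sub>R U k ! j + (\<Sum>i\<in>A. l i *\<^sub>R U k ! i)"
            using inv(5)[of k] kj(1) by (simp add: A_def l_def sum.remove)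
          also have "(\<Sum>i\<in>A. l i *\<^sub>R U k ! i) = (1 - l j) *\<^sub>R y"
            using lj by (simp add: y_def scaleR_sum_right)
          finally have "x - y = l j *\<^sub>R (U k ! j - y)" by (simp add: algebra_simps)
          hence "dist y x = l j * norm (U k ! j - y)" using lj by (simp add: dist_norm norm_minus_commute)
          also have "\<dots> \<le> \<delta> * (2 * R)"
          proof (rule mult_mono)
            show "l j \<le> \<delta>" using kj by (simp add: l_def)
            show "norm (U k ! j - y) \<le> 2 * R" using norm_triangle_ineq4[of "U k ! j" y] nu ny by linarith
          qed (use d0 in auto)
          also have "\<dots> \<le> e / 2" using d0 R by (simp add: field_simps)
          finally show ?thesis using yV e by (intro bexI[of _ y]) auto
        next
          case False
          hence P: "\<forall>t i. i < m \<longrightarrow> \<delta> < L t i" by (auto simp: not_le)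
          have O: "\<forall>t i. i < m \<longrightarrow> L t i \<le> 1"
          proof (intro allI impI)
            fix t i assume "i < m"
            hence "L t i \<le> sum (L t) {..<m}" using inv(3) by (intro member_le_sum) auto
            thus "L t i \<le> 1" using inv(4) by simp
          qed
          define Lw where "Lw = nat \<lceil>1 / \<delta>\<rceil>"
          have "real Lw \<ge> 1 / \<delta>" unfolding Lw_def by linarith
          hence Lw: "real Lw * \<delta> \<ge> 1" using d0 by (simp add: field_simps)
          have Win: "\<forall>K. \<forall>i<m. \<exists>t. K \<le> t \<and> t < K + Lw \<and> J t = i"
            using window[OF HL P O d0(1) Lw HJ] by blast
          have D0: "\<forall>c. \<forall>i<m. \<forall>l<m. U 0 ! i $ c - U 0 ! l $ c \<le> 2 * R"
          proof (intro allI impI)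
            fix c i l assume "i < m" "l < m"
            hence "norm (U 0 ! i) \<le> R" "norm (U 0 ! l) \<le> R" using R UinT by auto
            moreover have "\<bar>U 0 ! i $ c\<bar> \<le> norm (U 0 ! i)" "\<bar>U 0 ! l $ c\<bar> \<le> norm (U 0 ! l)"
              by (rule component_le_norm_cart)+
            ultimately show "U 0 ! i $ c - U 0 ! l $ c \<le> 2 * R" by linarith
          qed
          define q where "q = (real m - 1) / (real m + 1)"
          have q: "0 \<le> q" "q < 1" using m0 by (auto simp: q_def field_simps)
          have CI: "\<forall>c. \<forall>i<m. \<forall>l<m. U (n*Lw) ! i $ c - U (n*Lw) ! l $ c \<le> q^n * (2 * R)" for n
            using contr_iter[OF _ HJ H3 m0 Win D0] inv(2) by (simp add: q_def)
          have cpos: "real CARD('n) > 0" by simp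
          obtain n where n: "q^n < e / (2 * R * real CARD('n))"
            using real_arch_pow_inv[of "e / (2 * R * real CARD('n))" q] q e R cpos by auto
          define t where "t = n * Lw"
          define B where "B = real CARD('n) * (q^n * (2 * R))"
          have B: "B < e" using n R cpos by (simp add: B_def field_simps)
          have nb: "norm (U t ! i - U t ! 0) \<le> B" if "i < m" for i
          proof -
            have "\<bar>(U t ! i - U t ! 0) $ c\<bar> \<le> q^n * (2 * R)" for c
              using CI[of n] that m0 by (auto simp: t_def abs_le_iff)
            hence "(\<Sum>c\<in>UNIV. \<bar>(U t ! i - U t ! 0) $ c\<bar>) \<le> (\<Sum>c\<in>(UNIV::'n set). q^n * (2 * R))"
              by (intro sum_mono) auto
            thus ?thesis using norm_le_l1_cart[of "U t ! i - U t ! 0"] by (simp add: B_def)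
          qed
          have "x - U t ! 0 = (\<Sum>i<m. L t i *\<^sub>R (U t ! i - U t ! 0))"
            using inv(5)[of t] inv(4)[of t]
            by (simp add: scaleR_diff_right sum_subtractf scaleR_sum_left[symmetric])
          hence "norm (x - U t ! 0) \<le> (\<Sum>i<m. L t i * norm (U t ! i - U t ! 0))"
            using inv(3) by (auto intro: order.trans[OF norm_sum] simp: abs_of_nonneg)
          also have "\<dots> \<le> (\<Sum>i<m. L t i * B)"
            by (intro sum_mono mult_left_mono) (use inv(3) nb in auto)
          also have "\<dots> = B" using inv(4) by (simp add: sum_distrib_right[symmetric])
          finally have "dist (U t ! 0) x < e" using B by (simp add: dist_norm norm_minus_commute)
          moreover have "U t ! 0 \<in> V"
            using inv(1)[of t] inv(2)[of t] m0 unfolding V_def subdiv_vertices_def by force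
          ultimately show ?thesis using closure_subset by blast
        qed
      qed
      thus "x \<in> closure (\<Union>k. subdiv_vertices k T)" by (simp add: V_def)
    qed
  qed
qed

theorem lemma4:
  fixes vs :: "(real ^ 'n) list" and d :: nat
  assumes "length vs = d + 1"
    and "distinct vs"
    and "\<not> affine_dependent (set vs)"
  shows "(\<Union>k. subdiv_vertices k vs) \<subseteq> convex hull (set vs)
       \<and> convex hull (set vs) \<subseteq> closure (\<Union>k. subdiv_vertices k vs)"
proof
  show "(\<Union>k. subdiv_vertices k vs) \<subseteq> convex hull (set vs)"
    unfolding subdiv_vertices_def using iter_hull by blast
  show "convex hull (set vs) \<subseteq> closure (\<Union>k. subdiv_vertices k vs)"
    using main_dense by blast
qed


end
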